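(* Consider the initial value problem $\dot p=f(p,q)$, $\dot q=g(p,q)$, $p(t_0)=p_0$, $q(t_0)=q_0$ with smooth $f,g$ and $C^\infty$ solution $(p(t),q(t))$, and a partitioned linear multistep method of order $r$ as described in the context, with local truncation error constants $c_{j,p},c_{j,q}$. Let $e_{j,1,p},e_{j,1,q}$ ($j=r,\dots,2r-1$) be the smooth coefficient functions associated to the root $1$ in the asymptotic expansion of the global error, which satisfy $$\frac{d}{dt}\begin{pmatrix}e_{j,1,p}(t)\\ e_{j,1,q}(t)\end{pmatrix}=\begin{pmatrix}f_p&f_q\\ g_p&g_q\end{pmatrix}(p(t),q(t))\begin{pmatrix}e_{j,1,p}(t)\\ e_{j,1,q}(t)\end{pmatrix}-\begin{pmatrix}c_{j,p}p^{(j+1)}(t)\\ c_{j,q}q^{(j+1)}(t)\end{pmatrix},$$ and define the smooth part of the numerical solution $$\begin{pmatrix}p_h(t)\\ q_h(t)\end{pmatrix}=\begin{pmatrix}p(t)\\ q(t)\end{pmatrix}+\sum_{j=r}^{2r-1}h^j\begin{pmatrix}e_{j,1,p}(t)\\ e_{j,1,q}(t)\end{pmatrix}.$$ Let $I$ be a smooth invariant of the system (i.e. $I(p(t),q(t))$ is constant along every solution). Then $$\frac{d}{dt}I(p_h(t),q_h(t))=-\sum_{j=r}^{2r-1}h^j\,\nabla I(p(t),q(t))^T\begin{pmatrix}c_{j,p}p^{(j+1)}(t)\\ c_{j,q}q^{(j+1)}(t)\end{pmatrix}+O(h^{2r}).$$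
   Context: The method is $\rho_p(E)p_n=h\sigma_p(E)f(p_n,q_n)$, $\rho_q(E)q_n=h\sigma_q(E)g(p_n,q_n)$, with $E$ the shift operator, $t_n=nh$, both methods zero-stable of order $r$, with local truncation errors $\rho_\alpha(E)y(t_n)-h\sigma_\alpha(E)\dot y(t_n)=\sigma_\alpha(E)(\sum_{j=r}^{2r-1}c_{j,\alpha}h^{j+1}y^{(j+1)}(t_n))+O(h^{2r+1})$, $\alpha\in\{p,q\}$, for smooth $y$. $p\in\mathbb{R}^d$, $q\in\mathbb{R}^{n-d}$; $f_p,f_q,g_p,g_q$ denote partial Jacobians. *)

theory Defs
  imports "HOL-Analysis.Analysis"
begin

primrec Ck :: "nat \<Rightarrow> ('a::euclidean_space \<Rightarrow> 'b::real_normed_vector) \<Rightarrow> bool" where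
  "Ck 0 F = continuous_on UNIV F"
| "Ck (Suc k) F = ((\<forall>x. F differentiable (at x)) \<and>
      (\<forall>i\<in>Basis. Ck k (\<lambda>x. frechet_derivative F (at x) i)))"

definition smooth_map :: "('a::euclidean_space \<Rightarrow> 'b::real_normed_vector) \<Rightarrow> bool" where
  "smooth_map F \<longleftrightarrow> (\<forall>k. Ck k F)"

primrec vderivs :: "real set \<Rightarrow> nat \<Rightarrow> (real \<Rightarrow> 'a::real_normed_vector) \<Rightarrow> real \<Rightarrow> 'a" where
  "vderivs S 0 y = y"
| "vderivs S (Suc k) y = (\<lambda>t. vector_derivative (vderivs S k y) (at t within S))"

definition smooth_curve_on :: "real set \<Rightarrow> (real \<Rightarrow> 'a::real_normed_vector) \<Rightarrow> bool" where
  "smooth_curve_on S y \<longleftrightarrow>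
     (\<forall>k. \<forall>t\<in>S. (vderivs S k y has_vector_derivative vderivs S (Suc k) y t) (at t within S))"

definition is_invariant :: "('a::euclidean_space \<Rightarrow> 'a) \<Rightarrow> ('a \<Rightarrow> real) \<Rightarrow> bool" where
  "is_invariant F I \<longleftrightarrow>
     (\<forall>(z::real \<Rightarrow> 'a) J. is_interval J \<longrightarrow>
        (\<forall>t\<in>J. (z has_vector_derivative F (z t)) (at t within J)) \<longrightarrow>
        (\<forall>s\<in>J. \<forall>t\<in>J. I (z s) = I (z t)))"

end

theory Submission
  imports Defs
begin

lemma chain_vd:
  assumes g: "(g has_derivative g') (at (f x))"
    and f: "(f has_vector_derivative v) (at x within s)"
  shows "((\<lambda>x. g (f x)) has_vector_derivative g' v) (at x within s)"
proof -
  have lg: "linear g'" using g has_derivative_linear by blast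
  have "((\<lambda>x. g (f x)) has_derivative (\<lambda>y. g' (y *\<^sub>R v))) (at x within s)"
    using has_derivative_in_compose[OF f[unfolded has_vector_derivative_def]]
      has_derivative_at_withinI[OF g] by blast
  then show ?thesis unfolding has_vector_derivative_def
    using linear_scale[OF lg] by simp
qed

lemma lin_bound:
  fixes l :: "'a::euclidean_space \<Rightarrow> 'b::real_normed_vector"
  assumes "linear l"
  shows "norm (l v) \<le> norm v * (\<Sum>i\<in>Basis. norm (l i))"
proof -
  have "l v = l (\<Sum>i\<in>Basis. (v \<bullet> i) *\<^sub>R i)" by (simp add: euclidean_representation)
  also have "\<dots> = (\<Sum>i\<in>Basis. (v \<bullet> i) *\<^sub>R l i)"
    using assms by (simp add: linear_sum linear_scale)
  finally have "norm (l v) \<le> (\<Sum>i\<in>Basis. norm ((v \<bullet> i) *\<^sub>R l i))"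
    by (simp only:) (rule norm_sum)
  also have "\<dots> \<le> (\<Sum>i\<in>Basis. norm v * norm (l i))"
    by (intro sum_mono) (simp add: Basis_le_norm mult_right_mono)
  finally show ?thesis by (simp add: sum_distrib_left)
qed

lemma Ck_deriv:
  assumes "Ck (Suc k) G"
  shows "(G has_derivative frechet_derivative G (at x)) (at x)"
  using assms frechet_derivative_works by auto

lemma deriv_bound:
  fixes G :: "'a::euclidean_space \<Rightarrow> 'b::real_normed_vector"
  assumes "Ck 1 G"
  shows "\<exists>B\<ge>0. \<forall>x\<in>cball c R. \<forall>v. norm (frechet_derivative G (at x) v) \<le> B * norm v"
proof -
  define s where "s x = (\<Sum>i\<in>Basis. norm (frechet_derivative G (at x) i))" for x
  have "continuous_on UNIV s" unfolding s_def
    using assms by (auto intro!: continuous_intros)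
  then have "compact (s ` cball c R)"
    by (meson compact_cball compact_continuous_image continuous_on_subset subset_UNIV)
  then obtain B where B: "\<forall>y\<in>s ` cball c R. norm y \<le> B"
    using compact_imp_bounded bounded_iff by metis
  have "\<forall>x\<in>cball c R. \<forall>v. norm (frechet_derivative G (at x) v) \<le> max B 0 * norm v"
  proof (intro ballI allI)
    fix x v assume x: "x \<in> cball c R"
    have "linear (frechet_derivative G (at x))"
      using Ck_deriv[of 0 G x] assms has_derivative_linear by auto
    then have "norm (frechet_derivative G (at x) v) \<le> norm v * s x"
      unfolding s_def by (rule lin_bound)
    also have "\<dots> \<le> norm v * max B 0" using B x
      by (intro mult_left_mono) force+
    finally show "norm (frechet_derivative G (at x) v) \<le> max B 0 * norm v" by (simp add: mult.commute)
  qed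
  then show ?thesis by (intro exI[of _ "max B 0"]) auto
qed

lemma lip_bound:
  fixes G :: "'a::euclidean_space \<Rightarrow> 'b::real_normed_vector"
  assumes "Ck 1 G"
  shows "\<exists>L\<ge>0. \<forall>x\<in>cball c R. \<forall>y\<in>cball c R. norm (G x - G y) \<le> L * norm (x - y)"
proof -
  obtain B where B: "B \<ge> 0" "\<forall>x\<in>cball c R. \<forall>v. norm (frechet_derivative G (at x) v) \<le> B * norm v"
    using deriv_bound[OF assms] by blast
  have "\<forall>x\<in>cball c R. \<forall>y\<in>cball c R. norm (G x - G y) \<le> B * norm (x - y)"
  proof (intro ballI)
    fix x y assume xy: "x \<in> cball c R" "y \<in> cball c R"
    show "norm (G x - G y) \<le> B * norm (x - y)"
    proof (rule differentiable_bound[where f' = "\<lambda>x. frechet_derivative G (at x)"])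
      show "convex (cball c R)" by simp
      show "(G has_derivative frechet_derivative G (at z)) (at z within cball c R)" for z
        using Ck_deriv[of 0 G z] assms by (auto intro: has_derivative_at_withinI)
      show "onorm (frechet_derivative G (at z)) \<le> B" if "z \<in> cball c R" for z
        using B that by (intro onorm_le) auto
    qed (use xy in auto)
  qed
  then show ?thesis using B by blast
qed


lemma deriv_lip:
  fixes G :: "'a::euclidean_space \<Rightarrow> 'b::real_normed_vector"
  assumes "Ck 2 G"
  shows "\<exists>L\<ge>0. \<forall>x\<in>cball c R. \<forall>y\<in>cball c R. \<forall>v.
    norm (frechet_derivative G (at x) v - frechet_derivative G (at y) v) \<le> L * norm (x - y) * norm v"
proof -
  have C2: "Ck (Suc (Suc 0)) G" using assms by (simp add: numeral_2_eq_2)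
  have "\<forall>i\<in>Basis. \<exists>L\<ge>0. \<forall>x\<in>cball c R. \<forall>y\<in>cball c R.
      norm (frechet_derivative G (at x) i - frechet_derivative G (at y) i) \<le> L * norm (x - y)"
    using C2 by (auto intro!: lip_bound)
  then obtain Lf where Lf: "\<forall>i\<in>Basis. Lf i \<ge> 0 \<and> (\<forall>x\<in>cball c R. \<forall>y\<in>cball c R.
      norm (frechet_derivative G (at x) i - frechet_derivative G (at y) i) \<le> Lf i * norm (x - y))"
    by metis
  have "\<forall>x\<in>cball c R. \<forall>y\<in>cball c R. \<forall>v.
    norm (frechet_derivative G (at x) v - frechet_derivative G (at y) v) \<le> (\<Sum>i\<in>Basis. Lf i) * norm (x - y) * norm v"
  proof (intro ballI allI)
    fix x y v assume xy: "x \<in> cball c R" "y \<in> cball c R"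
    have lx: "linear (frechet_derivative G (at x))" and ly: "linear (frechet_derivative G (at y))"
      using Ck_deriv[of 1 G] C2 has_derivative_linear by auto
    have "linear (\<lambda>v. frechet_derivative G (at x) v - frechet_derivative G (at y) v)"
      using lx ly by (rule linear_compose_sub)
    then have "norm (frechet_derivative G (at x) v - frechet_derivative G (at y) v)
       \<le> norm v * (\<Sum>i\<in>Basis. norm (frechet_derivative G (at x) i - frechet_derivative G (at y) i))"
      by (rule lin_bound)
    also have "\<dots> \<le> norm v * (\<Sum>i\<in>Basis. Lf i * norm (x - y))"
      using Lf xy by (intro mult_left_mono sum_mono) auto
    finally show "norm (frechet_derivative G (at x) v - frechet_derivative G (at y) v) \<le> (\<Sum>i\<in>Basis. Lf i) * norm (x - y) * norm v"
      by (simp add: sum_distrib_right mult_ac)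
  qed
  moreover have "(\<Sum>i\<in>Basis. Lf i) \<ge> 0" using Lf by (intro sum_nonneg) auto
  ultimately show ?thesis by blast
qed

lemma taylor2:
  fixes G :: "'a::euclidean_space \<Rightarrow> 'b::real_normed_vector"
  assumes "Ck 2 G" and L: "L \<ge> 0" and lip: "\<forall>x\<in>cball c R. \<forall>y\<in>cball c R. \<forall>v.
    norm (frechet_derivative G (at x) v - frechet_derivative G (at y) v) \<le> L * norm (x - y) * norm v"
    and x: "x \<in> cball c R" and xe: "x + e \<in> cball c R"
  shows "norm (G (x + e) - G x - frechet_derivative G (at x) e) \<le> L * norm e ^ 2"
proof -
  have C2: "Ck (Suc (Suc 0)) G" using assms by (simp add: numeral_2_eq_2)
  define D where "D y = frechet_derivative G (at y)" for y
  have hd: "(G has_derivative D y) (at y)" for y using Ck_deriv[of 1 G] C2 D_def by auto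
  have lx: "bounded_linear (D x)" using hd has_derivative_bounded_linear by blast
  define S where "S = closed_segment x (x + e)"
  have Ssub: "S \<subseteq> cball c R" unfolding S_def using x xe
    by (simp add: closed_segment_subset)
  have "norm ((G (x + e) - D x (x + e)) - (G x - D x x)) \<le> (L * norm e) * norm ((x + e) - x)"
  proof (rule differentiable_bound[where S = S and f' = "\<lambda>y v. D y v - D x v"])
    show "convex S" unfolding S_def by simp
    show "((\<lambda>y. G y - D x y) has_derivative (\<lambda>v. D y v - D x v)) (at y within S)" for y
      by (intro has_derivative_diff has_derivative_at_withinI[OF hd] bounded_linear_imp_has_derivative lx)
    show "onorm (\<lambda>v. D y v - D x v) \<le> L * norm e" if y: "y \<in> S" for y
    proof (rule onorm_le)
      fix v :: 'a
      have "norm (y - x) \<le> norm e" using dist_in_closed_segment[OF y[unfolded S_def]]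
        by (simp add: dist_norm norm_minus_commute)
      then have "L * norm (y - x) * norm v \<le> L * norm e * norm v"
        using L by (intro mult_right_mono mult_left_mono) auto
      moreover have "norm (D y v - D x v) \<le> L * norm (y - x) * norm v"
        using lip Ssub y x unfolding D_def by blast
      ultimately show "norm (D y v - D x v) \<le> L * norm e * norm v" by linarith
    qed
  qed (auto simp: S_def)
  moreover have "(G (x + e) - D x (x + e)) - (G x - D x x) = G (x + e) - G x - D x e"
    using lx by (simp add: linear_simps)
  ultimately show ?thesis by (simp add: power2_eq_square mult_ac D_def[symmetric])
qed


lemma picard:
  fixes F :: "'c::euclidean_space \<Rightarrow> 'c"
  assumes cont: "continuous_on (cball w 1) F"
    and Mb: "\<And>x. x \<in> cball w 1 \<Longrightarrow> norm (F x) \<le> M"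
    and lip: "\<And>x y. x \<in> cball w 1 \<Longrightarrow> y \<in> cball w 1 \<Longrightarrow> norm (F x - F y) \<le> L * norm (x - y)"
    and M: "M > 0" and L: "L > 0"
    and d: "d = min (1/M) (1/(2*L))"
  shows "\<exists>z. z 0 = w \<and> (\<forall>t\<in>{0..d}. (z has_vector_derivative F (z t)) (at t within {0..d}))"
proof -
  have d0: "d > 0" using d M L by auto
  have Md: "M * d \<le> 1" using d M by (simp add: min_def field_simps)
  have Ld: "L * d \<le> 1/2" using d L by (simp add: min_def field_simps)
  define T where "T = (\<lambda>(\<phi>::real \<Rightarrow> 'c) t. w + integral {0..t} (\<lambda>s. F (\<phi> s)))"
  define zs where "zs n = (T ^^ n) (\<lambda>t. w)" for n
  have zs0: "zs 0 = (\<lambda>t. w)" by (simp add: zs_def)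
  have zsS: "zs (Suc n) = (\<lambda>t. w + integral {0..t} (\<lambda>s. F (zs n s)))" for n
    by (simp add: zs_def T_def)
  have cF: "continuous_on {0..d} (\<lambda>s. F (\<phi> s))"
    if "continuous_on {0..d} \<phi>" "\<forall>t\<in>{0..d}. \<phi> t \<in> cball w 1" for \<phi>
    by (rule continuous_on_compose2[OF cont that(1)]) (use that(2) in auto)
  have intb: "norm (integral {0..t} (\<lambda>s. F (\<phi> s))) \<le> M * d"
    if "continuous_on {0..d} \<phi>" "\<forall>t\<in>{0..d}. \<phi> t \<in> cball w 1" "t \<in> {0..d}" for \<phi> t
  proof -
    have "norm (integral {0..t} (\<lambda>s. F (\<phi> s))) \<le> M * (t - 0)"
      using that by (intro integral_bound continuous_on_subset[OF cF[OF that(1,2)]] Mb) auto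
    also have "\<dots> \<le> M * d" using that M by (intro mult_left_mono) auto
    finally show ?thesis .
  qed
  have P: "continuous_on {0..d} (zs n) \<and> (\<forall>t\<in>{0..d}. zs n t \<in> cball w 1)" for n
  proof (induction n)
    case 0 then show ?case by (simp add: zs0)
  next
    case (Suc n)
    have c1: "continuous_on {0..d} (zs (Suc n))" unfolding zsS
      by (intro continuous_on_add continuous_on_const indefinite_integral_continuous_1
          integrable_continuous_interval cF) (use Suc in auto)
    have "zs (Suc n) t \<in> cball w 1" if "t \<in> {0..d}" for t
      using intb[of "zs n" t] Suc that Md by (simp add: zsS dist_norm)
    then show ?case using c1 by blast
  qed
  have Q: "\<forall>t\<in>{0..d}. norm (zs (Suc n) t - zs n t) \<le> (1/2)^n" for n
  proof (induction n)
    case 0 then show ?case using intb[of "zs 0"] P[of 0] Md by (force simp: zsS zs0)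
  next
    case (Suc n)
    show ?case
    proof
      fix t assume t: "t \<in> {0..d}"
      have i1: "(\<lambda>s. F (zs k s)) integrable_on {0..t}" for k
        using t by (intro integrable_continuous_interval continuous_on_subset[OF cF]) (use P in auto)
      have "zs (Suc (Suc n)) t - zs (Suc n) t = integral {0..t} (\<lambda>s. F (zs (Suc n) s) - F (zs n s))"
      proof -
        have e1: "zs (Suc (Suc n)) t = w + integral {0..t} (\<lambda>s. F (zs (Suc n) s))"
          by (simp only: zsS[of "Suc n"])
        have e2: "zs (Suc n) t = w + integral {0..t} (\<lambda>s. F (zs n s))"
          by (simp only: zsS[of n])
        show ?thesis unfolding e1 e2 by (simp add: integral_diff[OF i1 i1])
      qed
      also have "norm \<dots> \<le> (L * (1/2)^n) * (t - 0)"
      proof (rule integral_bound)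
        show "continuous_on {0..t} (\<lambda>s. F (zs (Suc n) s) - F (zs n s))"
          using t by (intro continuous_on_diff continuous_on_subset[OF cF]) (use P in auto)
        fix s assume s: "s \<in> {0..t}"
        then have sd: "s \<in> {0..d}" using t by auto
        have "norm (F (zs (Suc n) s) - F (zs n s)) \<le> L * norm (zs (Suc n) s - zs n s)"
          using P sd by (intro lip) auto
        also have "\<dots> \<le> L * (1/2)^n" using Suc sd L by (intro mult_left_mono) auto
        finally show "norm (F (zs (Suc n) s) - F (zs n s)) \<le> L * (1/2)^n" .
      qed (use t in auto)
      also have "\<dots> \<le> (L * d) * (1/2)^n" using t L by (simp add: mult_ac mult_left_mono)
      also have "\<dots> \<le> (1/2) * (1/2)^n" using Ld by (intro mult_right_mono) auto
      finally show "norm (zs (Suc (Suc n)) t - zs (Suc n) t) \<le> (1/2)^(Suc n)" by simp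
    qed
  qed
  define z where "z x = w + (\<Sum>i. zs (Suc i) x - zs i x)" for x
  have "uniform_limit {0..d} (\<lambda>n x. \<Sum>i<n. zs (Suc i) x - zs i x) (\<lambda>x. \<Sum>i. zs (Suc i) x - zs i x) sequentially"
    by (rule Weierstrass_m_test[where M = "\<lambda>n. (1/2)^n"]) (use Q in auto)
  then have "uniform_limit {0..d} (\<lambda>n x. w + (\<Sum>i<n. zs (Suc i) x - zs i x)) z sequentially"
    unfolding z_def by (intro uniform_limit_add uniform_limit_const)
  moreover have "w + (\<Sum>i<n. zs (Suc i) x - zs i x) = zs n x" for n x
    using sum_lessThan_telescope[of "\<lambda>i. zs i x" n] by (simp add: zs0)
  ultimately have UL: "uniform_limit {0..d} zs z sequentially"
    by simp
  have cz: "continuous_on {0..d} z"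
    by (rule uniform_limit_theorem[OF _ UL]) (use P in auto)
  have lim: "(\<lambda>n. zs n t) \<longlonglongrightarrow> z t" if "t \<in> {0..d}" for t
    using tendsto_uniform_limitI[OF UL that] .
  have zin: "z t \<in> cball w 1" if "t \<in> {0..d}" for t
    by (rule Lim_in_closed_set[OF _ _ _ lim[OF that]]) (use P that in auto)
  have z0: "z 0 = w"
  proof -
    have "zs n 0 = w" for n by (cases n) (auto simp: zs0 zsS)
    then have "(\<lambda>n. zs n 0) \<longlonglongrightarrow> w" by simp
    then show ?thesis using lim[of 0] d0 LIMSEQ_unique by auto
  qed
  have cFz: "continuous_on {0..d} (\<lambda>s. F (z s))" using cF cz zin by blast
  have zeq: "z t = w + integral {0..t} (\<lambda>s. F (z s))" if t: "t \<in> {0..d}" for t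
  proof -
    have i1: "(\<lambda>s. F (zs k s)) integrable_on {0..t}" for k
      using t by (intro integrable_continuous_interval continuous_on_subset[OF cF]) (use P in auto)
    have i2: "(\<lambda>s. F (z s)) integrable_on {0..t}"
      using t by (intro integrable_continuous_interval continuous_on_subset[OF cFz]) auto
    have "(\<lambda>n. integral {0..t} (\<lambda>s. F (zs n s))) \<longlonglongrightarrow> integral {0..t} (\<lambda>s. F (z s))"
    proof (rule tendstoI)
      fix e :: real assume e: "e > 0"
      define e' where "e' = e / (2 * L * d)"
      have e': "e' > 0" using e L d0 by (simp add: e'_def)
      show "\<forall>\<^sub>F n in sequentially. dist (integral {0..t} (\<lambda>s. F (zs n s))) (integral {0..t} (\<lambda>s. F (z s))) < e"
        using uniform_limitD[OF UL e']
      proof eventually_elim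
        case (elim n)
        have "dist (integral {0..t} (\<lambda>s. F (zs n s))) (integral {0..t} (\<lambda>s. F (z s)))
            = norm (integral {0..t} (\<lambda>s. F (zs n s) - F (z s)))"
          by (simp add: dist_norm integral_diff[OF i1 i2])
        also have "\<dots> \<le> (L * e') * (t - 0)"
        proof (rule integral_bound)
          show "continuous_on {0..t} (\<lambda>s. F (zs n s) - F (z s))"
            using t by (intro continuous_on_diff continuous_on_subset[OF cF] continuous_on_subset[OF cFz])
              (use P in auto)
          fix s assume s: "s \<in> {0..t}"
          then have sd: "s \<in> {0..d}" using t by auto
          have "norm (F (zs n s) - F (z s)) \<le> L * norm (zs n s - z s)"
            using P sd zin by (intro lip) auto
          also have "\<dots> \<le> L * e'" using elim sd L by (intro mult_left_mono) (auto simp: dist_norm less_imp_le)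
          finally show "norm (F (zs n s) - F (z s)) \<le> L * e'" .
        qed (use t in auto)
        also have "\<dots> \<le> (L * e') * d" using t L e' by (intro mult_left_mono) auto
        also have "\<dots> = e / 2" using L d0 by (simp add: e'_def field_simps)
        also have "\<dots> < e" using e by simp
        finally show ?case .
      qed
    qed
    then have "(\<lambda>n. zs (Suc n) t) \<longlonglongrightarrow> w + integral {0..t} (\<lambda>s. F (z s))"
      unfolding zsS by (intro tendsto_add tendsto_const)
    moreover have "(\<lambda>n. zs (Suc n) t) \<longlonglongrightarrow> z t" using lim[OF t] by (rule LIMSEQ_Suc)
    ultimately show ?thesis using LIMSEQ_unique by blast
  qed
  have "(z has_vector_derivative F (z t)) (at t within {0..d})" if t: "t \<in> {0..d}" for t
  proof (rule has_vector_derivative_transform[OF t])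
    show "z x = w + integral {0..x} (\<lambda>s. F (z s))" if "x \<in> {0..d}" for x using zeq that .
    have "((\<lambda>u. integral {0..u} (\<lambda>s. F (z s))) has_vector_derivative F (z t)) (at t within {0..d})"
      by (rule integral_has_vector_derivative[OF cFz t])
    then show "((\<lambda>u. w + integral {0..u} (\<lambda>s. F (z s))) has_vector_derivative F (z t)) (at t within {0..d})"
      using has_vector_derivative_add[OF has_vector_derivative_const] by fastforce
  qed
  then show ?thesis using z0 by blast
qed


lemma inv_deriv_zero:
  fixes f :: "'a::euclidean_space \<times> 'b::euclidean_space \<Rightarrow> 'a" and g :: "'a \<times> 'b \<Rightarrow> 'b"
    and I :: "'a \<times> 'b \<Rightarrow> real"
  assumes f: "Ck 1 f" and g: "Ck 1 g" and I: "Ck 1 I"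
    and inv: "is_invariant (\<lambda>z. (f z, g z)) I"
  shows "frechet_derivative I (at w) (f w, g w) = 0"
proof -
  define F where "F z = (f z, g z)" for z
  have fd: "f differentiable (at x)" "g differentiable (at x)" for x
    using f g by (auto simp del: split_paired_All)
  have cF: "continuous_on UNIV F" unfolding F_def
    using fd by (intro continuous_on_Pair differentiable_imp_continuous_on) (auto simp: differentiable_on_def differentiable_at_withinI)
  obtain Lf where Lf: "Lf \<ge> 0" "\<forall>x\<in>cball w 1. \<forall>y\<in>cball w 1. norm (f x - f y) \<le> Lf * norm (x - y)"
    using lip_bound[OF f] by blast
  obtain Lg where Lg: "Lg \<ge> 0" "\<forall>x\<in>cball w 1. \<forall>y\<in>cball w 1. norm (g x - g y) \<le> Lg * norm (x - y)"
    using lip_bound[OF g] by blast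
  have lip: "norm (F x - F y) \<le> (Lf + Lg + 1) * norm (x - y)" if "x \<in> cball w 1" "y \<in> cball w 1" for x y
  proof -
    have "norm (F x - F y) \<le> norm (f x - f y) + norm (g x - g y)"
      unfolding F_def using norm_Pair_le[of "f x - f y" "g x - g y"] by simp
    also have "\<dots> \<le> Lf * norm (x - y) + Lg * norm (x - y)" using Lf Lg that by (intro add_mono) auto
    also have "\<dots> \<le> (Lf + Lg + 1) * norm (x - y)" by (simp add: distrib_right)
    finally show ?thesis .
  qed
  have "compact (F ` cball w 1)"
    using cF by (meson compact_cball compact_continuous_image continuous_on_subset subset_UNIV)
  then obtain M where M: "\<forall>y\<in>F ` cball w 1. norm y \<le> M"
    using compact_imp_bounded bounded_iff by metis
  define d where "d = min (1 / (max M 1)) (1 / (2 * (Lf + Lg + 1)))"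
  have d0: "d > 0" using Lf Lg by (simp add: d_def)
  obtain z where z0: "z 0 = w" and zd: "\<forall>t\<in>{0..d}. (z has_vector_derivative F (z t)) (at t within {0..d})"
  proof (rule picard[of w F "max M 1" "Lf + Lg + 1" d, THEN exE])
    show "continuous_on (cball w 1) F" using continuous_on_subset[OF cF] by blast
    show "norm (F x) \<le> max M 1" if "x \<in> cball w 1" for x using M that by force
    show "norm (F x - F y) \<le> (Lf + Lg + 1) * norm (x - y)" if "x \<in> cball w 1" "y \<in> cball w 1" for x y
      using lip that by blast
  qed (use Lf Lg d_def in auto)
  have const: "\<forall>s\<in>{0..d}. \<forall>t\<in>{0..d}. I (z s) = I (z t)"
  proof -
    have A: "is_interval {0..d}" by (rule is_interval_cc)
    have B: "\<forall>z J. is_interval J \<longrightarrow>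
           (\<forall>t\<in>J. (z has_vector_derivative (f (z t), g (z t))) (at t within J)) \<longrightarrow>
           (\<forall>s\<in>J. \<forall>t\<in>J. I (z s) = I (z t))" using inv unfolding is_invariant_def .
    have C: "\<forall>t\<in>{0..d}. (z has_vector_derivative (f (z t), g (z t))) (at t within {0..d})"
      using zd unfolding F_def .
    show ?thesis using mp[OF mp[OF spec[OF spec[OF B, of z], of "{0..d}"] A] C] .
  qed
  have 0: "0 \<in> {0..d}" using d0 by simp
  have D1: "((\<lambda>s. I (z s)) has_vector_derivative frechet_derivative I (at w) (F w)) (at 0 within {0..d})"
  proof -
    have "(I has_derivative frechet_derivative I (at (z 0))) (at (z 0))"
      using Ck_deriv[of 0 I] I by simp
    from chain_vd[OF this zd[rule_format, OF 0]] show ?thesis unfolding z0 .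
  qed
  have D2: "((\<lambda>s. I (z s)) has_vector_derivative 0) (at 0 within {0..d})"
    by (rule has_vector_derivative_transform[OF 0 _ has_vector_derivative_const[of "I w"]])
      (metis const 0 z0)
  have "frechet_derivative I (at w) (F w) = 0"
    using vector_derivative_unique_within_closed_interval[of 0 d 0 "\<lambda>s. I (z s)"] D1 D2 d0
    unfolding cbox_interval by simp
  then show ?thesis by (simp add: F_def)
qed


lemma vd_cont:
  assumes "\<forall>t\<in>S. (f has_vector_derivative f' t) (at t within S)"
  shows "continuous_on S f"
  using assms has_vector_derivative_continuous continuous_on_eq_continuous_within by blast

lemma cont_ub:
  fixes s :: "real \<Rightarrow> real"
  assumes "continuous_on {a..b} s"
  shows "\<exists>B. \<forall>t\<in>{a..b}. s t \<le> B"
proof -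
  have "compact (s ` {a..b})" using assms compact_continuous_image compact_Icc by blast
  then obtain B where "\<forall>y\<in>s ` {a..b}. norm y \<le> B" using compact_imp_bounded bounded_iff by metis
  then show ?thesis by (metis image_eqI real_norm_def abs_le_D1)
qed

lemma sc_cont:
  assumes "smooth_curve_on S y"
  shows "continuous_on S (vderivs S k y)"
  using assms unfolding smooth_curve_on_def by (intro vd_cont[where f'="vderivs S (Suc k) y"]) blast

theorem lemma1:
  fixes f :: "'a::euclidean_space \<times> 'b::euclidean_space \<Rightarrow> 'a"
    and g :: "'a \<times> 'b \<Rightarrow> 'b"
    and p :: "real \<Rightarrow> 'a" and q :: "real \<Rightarrow> 'b"
    and p0 :: 'a and q0 :: 'b and t0 a b :: real
    and r :: nat and cp cq :: "nat \<Rightarrow> real"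
    and ep :: "nat \<Rightarrow> real \<Rightarrow> 'a" and eq :: "nat \<Rightarrow> real \<Rightarrow> 'b"
    and I :: "'a \<times> 'b \<Rightarrow> real"
  assumes ab: "a < b" and t0: "t0 \<in> {a..b}"
    and r: "r \<ge> 1"
    and f_smooth: "smooth_map f" and g_smooth: "smooth_map g"
    and p_smooth: "smooth_curve_on {a..b} p" and q_smooth: "smooth_curve_on {a..b} q"
    and p_ode: "\<forall>t\<in>{a..b}. (p has_vector_derivative f (p t, q t)) (at t within {a..b})"
    and q_ode: "\<forall>t\<in>{a..b}. (q has_vector_derivative g (p t, q t)) (at t within {a..b})"
    and init: "p t0 = p0" "q t0 = q0"
    and ep_smooth: "\<forall>j\<in>{r..2*r-1}. smooth_curve_on {a..b} (ep j)"
    and eq_smooth: "\<forall>j\<in>{r..2*r-1}. smooth_curve_on {a..b} (eq j)"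
    and ep_ode: "\<forall>j\<in>{r..2*r-1}. \<forall>t\<in>{a..b}. (ep j has_vector_derivative
        (frechet_derivative f (at (p t, q t)) (ep j t, eq j t)
          - cp j *\<^sub>R vderivs {a..b} (Suc j) p t)) (at t within {a..b})"
    and eq_ode: "\<forall>j\<in>{r..2*r-1}. \<forall>t\<in>{a..b}. (eq j has_vector_derivative
        (frechet_derivative g (at (p t, q t)) (ep j t, eq j t)
          - cq j *\<^sub>R vderivs {a..b} (Suc j) q t)) (at t within {a..b})"
    and I_smooth: "smooth_map I"
    and I_inv: "is_invariant (\<lambda>z. (f z, g z)) I"
  shows "\<exists>C h0. h0 > 0 \<and> (\<forall>h. 0 < h \<and> h \<le> h0 \<longrightarrow> (\<forall>t\<in>{a..b}. \<exists>D.
           ((\<lambda>s. I (p s + (\<Sum>j=r..2*r-1. h ^ j *\<^sub>R ep j s),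
                     q s + (\<Sum>j=r..2*r-1. h ^ j *\<^sub>R eq j s)))
              has_vector_derivative D) (at t within {a..b}) \<and>
           \<bar>D - (- (\<Sum>j=r..2*r-1. h ^ j * frechet_derivative I (at (p t, q t))
                     (cp j *\<^sub>R vderivs {a..b} (Suc j) p t,
                      cq j *\<^sub>R vderivs {a..b} (Suc j) q t)))\<bar> \<le> C * h ^ (2*r)))"
proof -
  let ?S = "{a..b}"
  let ?J = "{r..2*r-1}"
  define W where "W j t = (cp j *\<^sub>R vderivs ?S (Suc j) p t, cq j *\<^sub>R vderivs ?S (Suc j) q t)" for j t
  define DI where "DI x = frechet_derivative I (at x)" for x
  define Df where "Df x = frechet_derivative f (at x)" for x
  define Dg where "Dg x = frechet_derivative g (at x)" for x
  have I1: "Ck 1 I" and I2: "Ck 2 I" and f1: "Ck 1 f" and f2: "Ck 2 f" and g1: "Ck 1 g" and g2: "Ck 2 g"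
    using I_smooth f_smooth g_smooth unfolding smooth_map_def by blast+
  have Izero: "DI x (f x, g x) = 0" for x
    unfolding DI_def by (rule inv_deriv_zero[OF f1 g1 I1 I_inv])
  have pc: "continuous_on ?S p" by (rule vd_cont[OF p_ode])
  have qc: "continuous_on ?S q" by (rule vd_cont[OF q_ode])
  have epc: "continuous_on ?S (ep j)" if "j \<in> ?J" for j by (rule vd_cont[OF bspec[OF ep_ode that]])
  have eqc: "continuous_on ?S (eq j)" if "j \<in> ?J" for j by (rule vd_cont[OF bspec[OF eq_ode that]])
  have Wc: "continuous_on ?S (W j)" for j unfolding W_def
    by (intro continuous_on_Pair continuous_on_scaleR continuous_on_const sc_cont p_smooth q_smooth)
  obtain Bz where Bz: "\<forall>t\<in>?S. norm (p t, q t) \<le> Bz"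
    using cont_ub[of a b "\<lambda>t. norm (p t, q t)"] continuous_on_norm[OF continuous_on_Pair[OF pc qc]] by blast
  obtain Se0 where Se0: "\<forall>t\<in>?S. (\<Sum>j\<in>?J. norm (ep j t) + norm (eq j t)) \<le> Se0"
  proof -
    have "continuous_on ?S (\<lambda>t. (\<Sum>j\<in>?J. norm (ep j t) + norm (eq j t)))"
      using epc eqc by (intro continuous_on_sum continuous_on_add continuous_on_norm) auto
    then show ?thesis using that cont_ub by blast
  qed
  obtain SW0 where SW0: "\<forall>t\<in>?S. (\<Sum>j\<in>?J. norm (W j t)) \<le> SW0"
  proof -
    have "continuous_on ?S (\<lambda>t. (\<Sum>j\<in>?J. norm (W j t)))"
      using Wc by (intro continuous_on_sum continuous_on_norm) auto
    then show ?thesis using that cont_ub by blast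
  qed
  define Se where "Se = max Se0 0"
  define SW where "SW = max SW0 0"
  have Se: "Se \<ge> 0" "\<forall>t\<in>?S. (\<Sum>j\<in>?J. norm (ep j t) + norm (eq j t)) \<le> Se"
    using Se0 by (auto simp: Se_def intro: order_trans)
  have SW: "SW \<ge> 0" "\<forall>t\<in>?S. (\<Sum>j\<in>?J. norm (W j t)) \<le> SW"
    using SW0 by (auto simp: SW_def intro: order_trans)
  define R where "R = max Bz 0 + 1"
  obtain BI where BI: "BI \<ge> 0" "\<forall>x\<in>cball 0 R. \<forall>v. norm (DI x v) \<le> BI * norm v"
    using deriv_bound[OF I1] unfolding DI_def by blast
  obtain LI where LI: "LI \<ge> 0" "\<forall>x\<in>cball 0 R. \<forall>y\<in>cball 0 R. \<forall>v. norm (DI x v - DI y v) \<le> LI * norm (x - y) * norm v"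
    using deriv_lip[OF I2] unfolding DI_def by blast
  obtain Lf where Lf: "Lf \<ge> 0" "\<forall>x\<in>cball 0 R. \<forall>y\<in>cball 0 R. \<forall>v. norm (frechet_derivative f (at x) v - frechet_derivative f (at y) v) \<le> Lf * norm (x - y) * norm v"
    using deriv_lip[OF f2] by blast
  obtain Lg where Lg: "Lg \<ge> 0" "\<forall>x\<in>cball 0 R. \<forall>y\<in>cball 0 R. \<forall>v. norm (frechet_derivative g (at x) v - frechet_derivative g (at y) v) \<le> Lg * norm (x - y) * norm v"
    using deriv_lip[OF g2] by blast
  define h0 where "h0 = min 1 (1 / (Se + 1))"
  define C where "C = BI * (Lf + Lg) * Se^2 + LI * Se * SW"
  have h00: "h0 > 0" using Se by (simp add: h0_def)
  have main: "\<exists>D. ((\<lambda>s. I (p s + (\<Sum>j=r..2*r-1. h ^ j *\<^sub>R ep j s),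
                     q s + (\<Sum>j=r..2*r-1. h ^ j *\<^sub>R eq j s)))
              has_vector_derivative D) (at t within {a..b}) \<and>
           \<bar>D - (- (\<Sum>j=r..2*r-1. h ^ j * frechet_derivative I (at (p t, q t))
                     (cp j *\<^sub>R vderivs {a..b} (Suc j) p t,
                      cq j *\<^sub>R vderivs {a..b} (Suc j) q t)))\<bar> \<le> C * h ^ (2*r)"
    if h: "0 < h" "h \<le> h0" and t: "t \<in> ?S" for h t
  proof -
    have h1: "h \<le> 1" using h by (simp add: h0_def)
    have hjr: "h ^ j \<le> h ^ r" if "j \<in> ?J" for j using that h h1 by (intro power_decreasing) auto
    have hr: "h ^ r \<le> h" using power_decreasing[of 1 r h] r h h1 by simp
    define zt where "zt = (p t, q t)"
    define Ep where "Ep = (\<Sum>j\<in>?J. h ^ j *\<^sub>R ep j t)"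
    define Eq where "Eq = (\<Sum>j\<in>?J. h ^ j *\<^sub>R eq j t)"
    define E where "E = (Ep, Eq)"
    define Z where "Z = (p t + Ep, q t + Eq)"
    have ZE: "Z = zt + E" by (simp add: Z_def zt_def E_def)
    have Esum: "E = (\<Sum>j\<in>?J. h ^ j *\<^sub>R (ep j t, eq j t))"
      by (simp add: E_def Ep_def Eq_def prod_eq_iff fst_sum snd_sum)
    have normE: "norm E \<le> h ^ r * Se"
    proof -
      have "norm E \<le> norm Ep + norm Eq" unfolding E_def by (rule norm_Pair_le)
      also have "\<dots> \<le> (\<Sum>j\<in>?J. h ^ j * norm (ep j t)) + (\<Sum>j\<in>?J. h ^ j * norm (eq j t))"
        unfolding Ep_def Eq_def using h
        by (intro add_mono order_trans[OF norm_sum] sum_mono) auto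
      also have "\<dots> = (\<Sum>j\<in>?J. h ^ j * (norm (ep j t) + norm (eq j t)))"
        by (simp add: sum.distrib distrib_left)
      also have "\<dots> \<le> (\<Sum>j\<in>?J. h ^ r * (norm (ep j t) + norm (eq j t)))"
        using hjr by (intro sum_mono mult_right_mono) auto
      also have "\<dots> \<le> h ^ r * Se" using Se t h by (simp add: sum_distrib_left[symmetric] mult_left_mono)
      finally show ?thesis .
    qed
    have E1: "norm E \<le> 1"
    proof -
      have "h ^ r * Se \<le> h * Se" using hr Se by (simp add: mult_right_mono)
      also have "\<dots> \<le> h0 * Se" using h Se by (simp add: mult_right_mono)
      also have "\<dots> \<le> (1 / (Se + 1)) * Se" using Se by (intro mult_right_mono) (auto simp: h0_def)
      also have "\<dots> \<le> 1" using Se by (simp add: field_simps)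
      finally show ?thesis using normE by linarith
    qed
    have ztR: "zt \<in> cball 0 R"
    proof -
      have "norm zt \<le> Bz" using Bz t unfolding zt_def by blast
      then show ?thesis by (simp add: R_def)
    qed
    have nzt: "norm zt \<le> max Bz 0" using Bz t unfolding zt_def by fastforce
    have ZR: "Z \<in> cball 0 R"
    proof -
      have "norm Z \<le> norm zt + norm E" unfolding ZE by (rule norm_triangle_ineq)
      then show ?thesis using nzt E1 by (auto simp: R_def)
    qed
    define V where "V = (f zt + (\<Sum>j\<in>?J. h ^ j *\<^sub>R (Df zt (ep j t, eq j t) - cp j *\<^sub>R vderivs ?S (Suc j) p t)),
                         g zt + (\<Sum>j\<in>?J. h ^ j *\<^sub>R (Dg zt (ep j t, eq j t) - cq j *\<^sub>R vderivs ?S (Suc j) q t)))"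
    have Vd: "((\<lambda>s. (p s + (\<Sum>j=r..2*r-1. h ^ j *\<^sub>R ep j s), q s + (\<Sum>j=r..2*r-1. h ^ j *\<^sub>R eq j s)))
               has_vector_derivative V) (at t within ?S)"
      unfolding V_def zt_def Df_def Dg_def
      using t p_ode q_ode ep_ode eq_ode
      by (intro has_vector_derivative_Pair has_vector_derivative_add has_vector_derivative_sum
          bounded_linear.has_vector_derivative[OF bounded_linear_scaleR_right]) auto
    have Dd: "((\<lambda>s. I (p s + (\<Sum>j=r..2*r-1. h ^ j *\<^sub>R ep j s), q s + (\<Sum>j=r..2*r-1. h ^ j *\<^sub>R eq j s)))
               has_vector_derivative DI Z V) (at t within ?S)"
    proof -
      have Zs: "Z = (p t + (\<Sum>j=r..2*r-1. h ^ j *\<^sub>R ep j t), q t + (\<Sum>j=r..2*r-1. h ^ j *\<^sub>R eq j t))"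
        by (simp add: Z_def Ep_def Eq_def)
      have "(I has_derivative DI Z) (at Z)" using Ck_deriv[of 0 I Z] I1 by (simp add: DI_def)
      then show ?thesis using chain_vd[OF _ Vd] unfolding Zs by blast
    qed
    have lDf: "linear (Df zt)" using Ck_deriv[of 0 f zt] f1 has_derivative_linear by (auto simp: Df_def)
    have lDg: "linear (Dg zt)" using Ck_deriv[of 0 g zt] g1 has_derivative_linear by (auto simp: Dg_def)
    have lZ: "linear (DI Z)" using Ck_deriv[of 0 I Z] I1 has_derivative_linear by (auto simp: DI_def)
    have lz: "linear (DI zt)" using Ck_deriv[of 0 I zt] I1 has_derivative_linear by (auto simp: DI_def)
    have DfE: "(\<Sum>j\<in>?J. h ^ j *\<^sub>R Df zt (ep j t, eq j t)) = Df zt E"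
      unfolding Esum by (simp only: linear_sum[OF lDf] linear_scale[OF lDf])
    have DgE: "(\<Sum>j\<in>?J. h ^ j *\<^sub>R Dg zt (ep j t, eq j t)) = Dg zt E"
      unfolding Esum by (simp only: linear_sum[OF lDg] linear_scale[OF lDg])
    define X where "X = (f zt + Df zt E - f Z, g zt + Dg zt E - g Z)"
    have Veq: "V = X + (f Z, g Z) - (\<Sum>j\<in>?J. h ^ j *\<^sub>R W j t)"
      unfolding V_def X_def W_def
      using DfE DgE by (simp add: prod_eq_iff fst_sum snd_sum scaleR_diff_right sum_subtractf)
    have DV: "DI Z V = DI Z X - (\<Sum>j\<in>?J. h ^ j * DI Z (W j t))"
      unfolding Veq using lZ Izero[of Z] by (simp add: linear_diff linear_add linear_sum linear_scale)
    define T where "T = - (\<Sum>j\<in>?J. h ^ j * DI zt (W j t))"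
    have "DI Z V - T = DI Z X - (\<Sum>j\<in>?J. h ^ j * (DI Z (W j t) - DI zt (W j t)))"
      unfolding DV T_def by (simp add: sum_subtractf right_diff_distrib)
    then have "\<bar>DI Z V - T\<bar> \<le> \<bar>DI Z X\<bar> + (\<Sum>j\<in>?J. h ^ j * \<bar>DI Z (W j t) - DI zt (W j t)\<bar>)"
      using h by (auto intro!: order_trans[OF abs_triangle_ineq4] add_mono order_trans[OF sum_abs] sum_mono
          simp: abs_mult)
    also have "\<dots> \<le> BI * ((Lf + Lg) * (h ^ r * Se)^2) + (\<Sum>j\<in>?J. h ^ (2*r) * (LI * Se * norm (W j t)))"
    proof (rule add_mono)
      have tf: "norm (f (zt + E) - f zt - Df zt E) \<le> Lf * norm E ^ 2"
        unfolding Df_def by (rule taylor2[OF f2 Lf(1) Lf(2) ztR ZR[unfolded ZE]])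
      have tg: "norm (g (zt + E) - g zt - Dg zt E) \<le> Lg * norm E ^ 2"
        unfolding Dg_def by (rule taylor2[OF g2 Lg(1) Lg(2) ztR ZR[unfolded ZE]])
      have "norm X \<le> norm (f zt + Df zt E - f Z) + norm (g zt + Dg zt E - g Z)"
        unfolding X_def by (rule norm_Pair_le)
      also have "\<dots> = norm (f (zt + E) - f zt - Df zt E) + norm (g (zt + E) - g zt - Dg zt E)"
        unfolding ZE by (simp add: norm_minus_commute algebra_simps)
      also have "\<dots> \<le> (Lf + Lg) * norm E ^ 2" using tf tg by (simp add: distrib_right)
      also have "\<dots> \<le> (Lf + Lg) * (h ^ r * Se) ^ 2"
        using normE Lf Lg by (intro mult_left_mono power_mono) auto
      finally have nX: "norm X \<le> (Lf + Lg) * (h ^ r * Se) ^ 2" .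
      have "\<bar>DI Z X\<bar> \<le> BI * norm X" using BI ZR by (metis real_norm_def)
      also have "\<dots> \<le> BI * ((Lf + Lg) * (h ^ r * Se)^2)" using nX BI by (intro mult_left_mono)
      finally show "\<bar>DI Z X\<bar> \<le> BI * ((Lf + Lg) * (h ^ r * Se)^2)" .
    next
      show "(\<Sum>j\<in>?J. h ^ j * \<bar>DI Z (W j t) - DI zt (W j t)\<bar>) \<le> (\<Sum>j\<in>?J. h ^ (2*r) * (LI * Se * norm (W j t)))"
      proof (rule sum_mono)
        fix j assume j: "j \<in> ?J"
        have "\<bar>DI Z (W j t) - DI zt (W j t)\<bar> \<le> LI * norm (Z - zt) * norm (W j t)"
          using LI ZR ztR by (metis real_norm_def)
        also have "\<dots> \<le> LI * (h ^ r * Se) * norm (W j t)"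
          using normE LI unfolding ZE by (intro mult_right_mono mult_left_mono) auto
        finally have 1: "\<bar>DI Z (W j t) - DI zt (W j t)\<bar> \<le> LI * (h ^ r * Se) * norm (W j t)" .
        have "h ^ j * \<bar>DI Z (W j t) - DI zt (W j t)\<bar> \<le> h ^ r * (LI * (h ^ r * Se) * norm (W j t))"
          using hjr[OF j] h 1 LI Se by (intro mult_mono) auto
        also have "\<dots> = h ^ (2*r) * (LI * Se * norm (W j t))"
          by (simp add: power_add[symmetric] mult_2 mult_2_right mult_ac)
        finally show "h ^ j * \<bar>DI Z (W j t) - DI zt (W j t)\<bar> \<le> h ^ (2*r) * (LI * Se * norm (W j t))" .
      qed
    qed
    also have "\<dots> \<le> C * h ^ (2*r)"
    proof -
      have "(\<Sum>j\<in>?J. h ^ (2*r) * (LI * Se * norm (W j t))) = h ^ (2*r) * (LI * Se) * (\<Sum>j\<in>?J. norm (W j t))"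
        by (simp add: sum_distrib_left mult_ac)
      also have "\<dots> \<le> h ^ (2*r) * (LI * Se) * SW"
        using SW t h LI Se by (intro mult_left_mono) auto
      finally have 2: "(\<Sum>j\<in>?J. h ^ (2*r) * (LI * Se * norm (W j t))) \<le> h ^ (2*r) * (LI * Se) * SW" .
      have 3: "BI * ((Lf + Lg) * (h ^ r * Se)^2) = h ^ (2*r) * (BI * (Lf + Lg) * Se^2)"
        by (simp add: power_mult_distrib power_mult[symmetric] mult_ac)
      show ?thesis using 2 unfolding 3 C_def by (simp add: algebra_simps)
    qed
    finally have bound: "\<bar>DI Z V - T\<bar> \<le> C * h ^ (2*r)" .
    show ?thesis
      using Dd bound unfolding T_def DI_def W_def zt_def by blast
  qed
  show ?thesis using h00 main by blast
qed

end
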